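(* Let $0<H<1$, $H\neq 1/2$, $\lambda>0$, $\tau>0$, $h>0$, $l>0$, $L>0$, $L'>0$, and let $K_\nu(s)=\frac12\int_0^\infty z^{\nu-1}\exp[-\frac{s}{2}(z+\frac1z)]\,dz$ for $s>0$. Let $(t_k)_{k\ge1}$ be positive times and, for each $k\ge0$, let $r_k$ be either $$r_k=\frac{\Gamma(H+1/2)}{2H\sqrt{\pi}(2\lambda)^H}\,\lambda\, t_{k+1}^{1-H}K_{H-1}(\lambda t_{k+1})\,\tau \quad\text{or}\quad r_k=\frac{\Gamma(H+1/2)}{H\sqrt{\pi}(2\lambda)^H}\,\lambda\, t_{k+1}K_{H-1}(\lambda t_{k+1})\,\tau$$ (the first choice being used for all $k$ when $0<H<1/2$; when $1/2<H<1$ the first choice is used for $k\le k_1$ and the second for $k> k_1$, for some index $k_1$). Let $u^0,u^1,u^2,\dots$ be functions in $L^2$ of the periodic domain $[0,L)\times[0,L')$ (i.e. $L$-periodic in $x$ and $L'$-periodic in $y$) satisfying, for all $k\ge0$ and all $(x,y)$, the implicit difference relation $$\Big(1+\frac{2r_k}{h^2}+\frac{2r_k}{l^2}\Big)u^{k+1}(x,y)-\frac{r_k}{h^2}\big(u^{k+1}(x+h,y)+u^{k+1}(x-h,y)\big)-\frac{r_k}{l^2}\big(u^{k+1}(x,y+l)+u^{k+1}(x,y-l)\big)=u^k(x,y).$$ Then the scheme is unconditionally stable: for every $k\ge0$ (and every $\tau,h,l>0$), $$\|u^k\|_{L^2}^2\le\|u^0\|_{L^2}^2 .$$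
   Context: This is the finite-difference scheme for the equation $\partial_t u=\frac{\Gamma(H+1/2)}{\sqrt{\pi}(2\lambda)^H}\lambda t^H K_{H-1}(\lambda t)(\partial_x^2+\partial_y^2)u$ (Fokker–Planck equation of tempered fractional Brownian motion), discretized implicitly in the variable $t^{2H}$ (nonuniform mesh $t_k=(\tau k)^{1/(2H)}$, so that $t_{k+1}^{2H}-t_k^{2H}=\tau$) and, in the case $1/2<H<1$ after the index $k_1$, in the variable $t^{H}$ (with step $\tau$ in $t^H$). Stability is in the sense of the Fourier (von Neumann) method: $\|\cdot\|_{L^2}$ is the $L^2$ norm over $[0,L)\times[0,L')$. Note $K_{H-1}(s)>0$ for $s>0$, so $r_k>0$. *)

theory Defs
  imports "HOL-Analysis.Analysis"
begin

definition BesselK :: "real \<Rightarrow> real \<Rightarrow> real" where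
  "BesselK nu s = (1/2) * set_lebesgue_integral lborel {0<..}
      (\<lambda>z. z powr (nu - 1) * exp (- (s/2) * (z + 1/z)))"

definition r_first :: "real \<Rightarrow> real \<Rightarrow> real \<Rightarrow> real \<Rightarrow> real" where
  "r_first H lam tau t = Gamma (H + 1/2) / (2 * H * sqrt pi * (2 * lam) powr H)
      * lam * t powr (1 - H) * BesselK (H - 1) (lam * t) * tau"

definition r_second :: "real \<Rightarrow> real \<Rightarrow> real \<Rightarrow> real \<Rightarrow> real" where
  "r_second H lam tau t = Gamma (H + 1/2) / (H * sqrt pi * (2 * lam) powr H)
      * lam * t * BesselK (H - 1) (lam * t) * tau"

definition L2sq :: "real \<Rightarrow> real \<Rightarrow> (real \<Rightarrow> real \<Rightarrow> real) \<Rightarrow> real" where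
  "L2sq L L' f = set_lebesgue_integral lborel ({0..<L} \<times> {0..<L'})
      (\<lambda>p. (f (fst p) (snd p))\<^sup>2)"

end

theory Submission imports Defs begin

lemma per_int:
  fixes g :: "real \<Rightarrow> 'a"
  assumes per: "\<And>x. g (x + L) = g x"
  shows "g (x + of_int n * L) = g x"
proof (cases "n \<ge> 0")
  case True
  then obtain m where m: "n = int m" by (metis nonneg_int_cases)
  have "g (x + real m * L) = g x" for x
  proof (induction m)
    case (Suc m)
    have "g (x + real (Suc m) * L) = g ((x + real m * L) + L)" by (simp add: algebra_simps)
    also have "\<dots> = g (x + real m * L)" by (rule per)
    finally show ?case using Suc by simp
  qed simp
  then show ?thesis using m by simp
next
  case False
  define m where "m = nat (- n)"
  have m: "n = - int m" using False by (simp add: m_def)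
  have "g (x - real m * L) = g x" for x
  proof (induction m)
    case (Suc m)
    have "g (x - real (Suc m) * L) = g (x - real (Suc m) * L + L)" using per by simp
    also have "\<dots> = g (x - real m * L)" by (simp add: algebra_simps)
    finally show ?case using Suc by simp
  qed simp
  then show ?thesis using m by simp
qed

lemma shift1:
  fixes g :: "real \<Rightarrow> ennreal" and L c :: real
  assumes g[measurable]: "g \<in> borel_measurable borel" and L: "L > 0"
    and per: "\<And>x. g (x + L) = g x"
  shows "(\<integral>\<^sup>+x. indicator {0..<L} x * g (x + c) \<partial>lborel) = (\<integral>\<^sup>+x. indicator {0..<L} x * g x \<partial>lborel)"
proof -
  define n where "n = floor (c / L)"
  define a where "a = c - of_int n * L"
  have f1: "of_int n \<le> c / L" unfolding n_def by simp
  have f2: "c / L < of_int n + 1" unfolding n_def by simp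
  have "of_int n * L \<le> c" using f1 L by (simp add: le_divide_eq)
  then have a0: "0 \<le> a" unfolding a_def by simp
  have "c < (of_int n + 1) * L" using f2 L by (simp add: divide_less_eq)
  then have aL: "a < L" unfolding a_def by (simp add: algebra_simps)
  have gc: "g (x + c) = g (x + a)" for x
    using per_int[of g L "x + a" n, OF per] by (simp add: a_def)
  have "(\<integral>\<^sup>+x. indicator {0..<L} x * g (x + c) \<partial>lborel) = (\<integral>\<^sup>+x. indicator {0..<L} x * g (a + x) \<partial>lborel)"
    by (simp add: gc add.commute)
  also have "\<dots> = (\<integral>\<^sup>+x. indicator {a..<L+a} x * g x \<partial>lborel)"
    using nn_integral_real_affine[of "\<lambda>x. indicator {a..<L+a} x * g x" 1 a]
    by (simp add: indicator_def)
  also have "\<dots> = (\<integral>\<^sup>+x. indicator {a..<L} x * g x + indicator {L..<L+a} x * g x \<partial>lborel)"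
    using a0 aL by (intro nn_integral_cong) (auto simp: indicator_def)
  also have "\<dots> = (\<integral>\<^sup>+x. indicator {a..<L} x * g x \<partial>lborel) + (\<integral>\<^sup>+x. indicator {L..<L+a} x * g x \<partial>lborel)"
    by (rule nn_integral_add) auto
  also have "(\<integral>\<^sup>+x. indicator {L..<L+a} x * g x \<partial>lborel) = (\<integral>\<^sup>+x. indicator {0..<a} x * g x \<partial>lborel)"
    using nn_integral_real_affine[of "\<lambda>x. indicator {L..<L+a} x * g x" 1 L]
    by (simp add: indicator_def add.commute[of L] per)
  also have "(\<integral>\<^sup>+x. indicator {a..<L} x * g x \<partial>lborel) + (\<integral>\<^sup>+x. indicator {0..<a} x * g x \<partial>lborel)
      = (\<integral>\<^sup>+x. indicator {a..<L} x * g x + indicator {0..<a} x * g x \<partial>lborel)"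
    by (rule nn_integral_add[symmetric]) auto
  also have "\<dots> = (\<integral>\<^sup>+x. indicator {0..<L} x * g x \<partial>lborel)"
    using a0 aL by (intro nn_integral_cong) (auto simp: indicator_def)
  finally show ?thesis .
qed


lemma cell_borel[measurable]: "{a..<b::real}\<times>{c..<d::real} \<in> sets (borel :: (real \<times> real) measure)"
  by (subst borel_prod[symmetric]) (rule pair_measureI, auto)

lemma shift2x:
  fixes F :: "real \<times> real \<Rightarrow> ennreal" and L L' c :: real
  assumes F[measurable]: "F \<in> borel_measurable borel" and L: "L > 0"
    and per: "\<And>x y. F (x + L, y) = F (x, y)"
  shows "(\<integral>\<^sup>+p. indicator ({0..<L}\<times>{0..<L'}) p * F (fst p + c, snd p) \<partial>lborel)
       = (\<integral>\<^sup>+p. indicator ({0..<L}\<times>{0..<L'}) p * F p \<partial>lborel)"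
proof -
  have Fy[measurable]: "(\<lambda>x. F (x, y)) \<in> borel_measurable borel" for y
    by (rule measurable_compose[OF _ F]) simp
  have sh[measurable]: "(\<lambda>p. F (fst p + c, snd p)) \<in> borel_measurable borel"
    by (rule measurable_compose[OF _ F]) (intro borel_measurable_continuous_onI continuous_intros)
  have m1: "(\<lambda>p. indicator ({0..<L}\<times>{0..<L'}) p * F (fst p + c, snd p)) \<in> borel_measurable (lborel \<Otimes>\<^sub>M lborel)"
    unfolding lborel_prod by simp
  have m2: "(\<lambda>p. indicator ({0..<L}\<times>{0..<L'}) p * F p) \<in> borel_measurable (lborel \<Otimes>\<^sub>M lborel)"
    unfolding lborel_prod by simp
  have "(\<integral>\<^sup>+p. indicator ({0..<L}\<times>{0..<L'}) p * F (fst p + c, snd p) \<partial>lborel)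
     = (\<integral>\<^sup>+y. (\<integral>\<^sup>+x. indicator ({0..<L}\<times>{0..<L'}) (x,y) * F (x + c, y) \<partial>lborel) \<partial>lborel)"
    using lborel_pair.nn_integral_snd[OF m1] by (simp add: lborel_prod)
  also have "\<dots> = (\<integral>\<^sup>+y. indicator {0..<L'} y * (\<integral>\<^sup>+x. indicator {0..<L} x * F (x + c, y) \<partial>lborel) \<partial>lborel)"
    by (subst nn_integral_cmult[symmetric]) (auto simp: indicator_times mult_ac intro!: nn_integral_cong)
  also have "\<dots> = (\<integral>\<^sup>+y. indicator {0..<L'} y * (\<integral>\<^sup>+x. indicator {0..<L} x * F (x, y) \<partial>lborel) \<partial>lborel)"
    using shift1[OF Fy L, of _ c] per by simp
  also have "\<dots> = (\<integral>\<^sup>+y. (\<integral>\<^sup>+x. indicator ({0..<L}\<times>{0..<L'}) (x,y) * F (x, y) \<partial>lborel) \<partial>lborel)"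
    by (subst nn_integral_cmult[symmetric]) (auto simp: indicator_times mult_ac intro!: nn_integral_cong)
  also have "\<dots> = (\<integral>\<^sup>+p. indicator ({0..<L}\<times>{0..<L'}) p * F p \<partial>lborel)"
    using lborel_pair.nn_integral_snd[OF m2] by (simp add: lborel_prod)
  finally show ?thesis .
qed

lemma shift2y:
  fixes F :: "real \<times> real \<Rightarrow> ennreal" and L L' c :: real
  assumes F[measurable]: "F \<in> borel_measurable borel" and L: "L' > 0"
    and per: "\<And>x y. F (x, y + L') = F (x, y)"
  shows "(\<integral>\<^sup>+p. indicator ({0..<L}\<times>{0..<L'}) p * F (fst p, snd p + c) \<partial>lborel)
       = (\<integral>\<^sup>+p. indicator ({0..<L}\<times>{0..<L'}) p * F p \<partial>lborel)"
proof -
  have Fx[measurable]: "(\<lambda>y. F (x, y)) \<in> borel_measurable borel" for x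
    by (rule measurable_compose[OF _ F]) simp
  have sh[measurable]: "(\<lambda>p. F (fst p, snd p + c)) \<in> borel_measurable borel"
    by (rule measurable_compose[OF _ F]) (intro borel_measurable_continuous_onI continuous_intros)
  have m1: "(\<lambda>p. indicator ({0..<L}\<times>{0..<L'}) p * F (fst p, snd p + c)) \<in> borel_measurable (lborel \<Otimes>\<^sub>M lborel)"
    unfolding lborel_prod by simp
  have m2: "(\<lambda>p. indicator ({0..<L}\<times>{0..<L'}) p * F p) \<in> borel_measurable (lborel \<Otimes>\<^sub>M lborel)"
    unfolding lborel_prod by simp
  have "(\<integral>\<^sup>+p. indicator ({0..<L}\<times>{0..<L'}) p * F (fst p, snd p + c) \<partial>lborel)
     = (\<integral>\<^sup>+x. (\<integral>\<^sup>+y. indicator ({0..<L}\<times>{0..<L'}) (x,y) * F (x, y + c) \<partial>lborel) \<partial>lborel)"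
    using lborel.nn_integral_fst[OF m1] by (simp add: lborel_prod)
  also have "\<dots> = (\<integral>\<^sup>+x. indicator {0..<L} x * (\<integral>\<^sup>+y. indicator {0..<L'} y * F (x, y + c) \<partial>lborel) \<partial>lborel)"
    by (subst nn_integral_cmult[symmetric]) (auto simp: indicator_times mult_ac intro!: nn_integral_cong)
  also have "\<dots> = (\<integral>\<^sup>+x. indicator {0..<L} x * (\<integral>\<^sup>+y. indicator {0..<L'} y * F (x, y) \<partial>lborel) \<partial>lborel)"
    using shift1[OF Fx L, of _ c] per by simp
  also have "\<dots> = (\<integral>\<^sup>+x. (\<integral>\<^sup>+y. indicator ({0..<L}\<times>{0..<L'}) (x,y) * F (x, y) \<partial>lborel) \<partial>lborel)"
    by (subst nn_integral_cmult[symmetric]) (auto simp: indicator_times mult_ac intro!: nn_integral_cong)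
  also have "\<dots> = (\<integral>\<^sup>+p. indicator ({0..<L}\<times>{0..<L'}) p * F p \<partial>lborel)"
    using lborel.nn_integral_fst[OF m2] by (simp add: lborel_prod)
  finally show ?thesis .
qed

lemma shift_real:
  fixes f :: "real \<times> real \<Rightarrow> real" and s :: "real \<times> real \<Rightarrow> real \<times> real"
  assumes f[measurable]: "f \<in> borel_measurable borel" and s[measurable]: "s \<in> borel_measurable borel"
    and nn: "\<And>p. f p \<ge> 0" and C[measurable]: "C \<in> sets borel"
    and int: "set_integrable lborel C f"
    and eq: "(\<integral>\<^sup>+p. indicator C p * ennreal (f (s p)) \<partial>lborel) = (\<integral>\<^sup>+p. indicator C p * ennreal (f p) \<partial>lborel)"
  shows "set_integrable lborel C (\<lambda>p. f (s p))"
    and "set_lebesgue_integral lborel C (\<lambda>p. f (s p)) = set_lebesgue_integral lborel C f"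
proof -
  have e: "ennreal (indicator C p * y) = indicator C p * ennreal y" for y :: real and p
    by (auto simp: indicator_def)
  have I: "integrable lborel (\<lambda>p. indicator C p *\<^sub>R f p)" using int by (simp add: set_integrable_def)
  have fin: "(\<integral>\<^sup>+p. ennreal (indicator C p *\<^sub>R f p) \<partial>lborel) = ennreal (integral\<^sup>L lborel (\<lambda>p. indicator C p *\<^sub>R f p))"
    by (rule nn_integral_eq_integral[OF I]) (auto simp: nn)
  have fs: "(\<lambda>p. f (s p)) \<in> borel_measurable borel" by simp
  show I2: "set_integrable lborel C (\<lambda>p. f (s p))"
    unfolding set_integrable_def
    apply (rule integrableI_nn_integral_finite[where x="integral\<^sup>L lborel (\<lambda>p. indicator C p *\<^sub>R f p)"])
    using fin eq nn by (auto simp: e)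
  show "set_lebesgue_integral lborel C (\<lambda>p. f (s p)) = set_lebesgue_integral lborel C f"
    unfolding set_lebesgue_integral_def
    by (subst (1 2) integral_eq_nn_integral) (auto simp: e eq nn)
qed


lemma pw:
  fixes a b w v p1 p2 q1 q2 :: real
  assumes a: "a \<ge> 0" and b: "b \<ge> 0"
    and w: "w = (1 + 2*a + 2*b) * v - a * (p1 + p2) - b * (q1 + q2)"
  shows "(1/2 + a + b) * v\<^sup>2 \<le> 1/2 * w\<^sup>2 + (a/2 * (p1\<^sup>2 + p2\<^sup>2) + b/2 * (q1\<^sup>2 + q2\<^sup>2))"
proof -
  have id: "1/2 * w\<^sup>2 + (a/2 * (p1\<^sup>2 + p2\<^sup>2) + b/2 * (q1\<^sup>2 + q2\<^sup>2)) - (1/2 + a + b) * v\<^sup>2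
     = 1/2 * (w - v)\<^sup>2 + a/2 * ((v - p1)\<^sup>2 + (v - p2)\<^sup>2) + b/2 * ((v - q1)\<^sup>2 + (v - q2)\<^sup>2)"
    unfolding w by (simp add: power2_eq_square field_simps)
  have "0 \<le> 1/2 * (w - v)\<^sup>2 + a/2 * ((v - p1)\<^sup>2 + (v - p2)\<^sup>2) + b/2 * ((v - q1)\<^sup>2 + (v - q2)\<^sup>2)"
    using a b by (intro add_nonneg_nonneg mult_nonneg_nonneg) auto
  then show ?thesis using id by linarith
qed

lemma BesselK_nonneg: "BesselK nu s \<ge> 0"
  unfolding BesselK_def set_lebesgue_integral_def
  by (intro mult_nonneg_nonneg Bochner_Integration.integral_nonneg) (auto simp: indicator_def)

lemma r_first_nonneg: "lam > 0 \<Longrightarrow> tau > 0 \<Longrightarrow> H > 0 \<Longrightarrow> t > 0 \<Longrightarrow> r_first H lam tau t \<ge> 0"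
  unfolding r_first_def
  by (intro mult_nonneg_nonneg divide_nonneg_nonneg BesselK_nonneg) auto

lemma r_second_nonneg: "lam > 0 \<Longrightarrow> tau > 0 \<Longrightarrow> H > 0 \<Longrightarrow> t > 0 \<Longrightarrow> r_second H lam tau t \<ge> 0"
  unfolding r_second_def
  by (intro mult_nonneg_nonneg divide_nonneg_nonneg BesselK_nonneg) auto

theorem mainTheorem2:
  fixes H lam tau h l L L' :: real
    and t :: "nat \<Rightarrow> real"
    and r :: "nat \<Rightarrow> real"
    and u :: "nat \<Rightarrow> real \<Rightarrow> real \<Rightarrow> real"
  assumes H: "0 < H" "H < 1" "H \<noteq> 1/2"
    and pos: "lam > 0" "tau > 0" "h > 0" "l > 0" "L > 0" "L' > 0"
    and tpos: "\<And>k. k \<ge> 1 \<Longrightarrow> t k > 0"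
    and r_small: "H < 1/2 \<Longrightarrow> (\<forall>k. r k = r_first H lam tau (t (k+1)))"
    and r_large: "H > 1/2 \<Longrightarrow> (\<exists>k1. \<forall>k. r k =
        (if k \<le> k1 then r_first H lam tau (t (k+1)) else r_second H lam tau (t (k+1))))"
    and meas: "\<And>k. (\<lambda>p. u k (fst p) (snd p)) \<in> borel_measurable (borel :: (real \<times> real) measure)"
    and sqint: "\<And>k. set_integrable lborel ({0..<L} \<times> {0..<L'}) (\<lambda>p. (u k (fst p) (snd p))\<^sup>2)"
    and perx: "\<And>k x y. u k (x + L) y = u k x y"
    and pery: "\<And>k x y. u k x (y + L') = u k x y"
    and scheme: "\<And>k x y.
        (1 + 2 * r k / h\<^sup>2 + 2 * r k / l\<^sup>2) * u (k+1) x y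
        - r k / h\<^sup>2 * (u (k+1) (x + h) y + u (k+1) (x - h) y)
        - r k / l\<^sup>2 * (u (k+1) x (y + l) + u (k+1) x (y - l)) = u k x y"
  shows "\<forall>k. L2sq L L' (u k) \<le> L2sq L L' (u 0)"
  proof -
  define C where "C = {0..<L}\<times>{0..<L'}"
  have rnn: "r k \<ge> 0" for k
  proof -
    have tk: "t (k+1) > 0" using tpos by simp
    show ?thesis
    proof (cases "H < 1/2")
      case True
      then show ?thesis using r_small r_first_nonneg[OF pos(1,2) H(1) tk] by simp
    next
      case False
      then have "H > 1/2" using H(3) by simp
      then obtain k1 where "\<forall>k. r k = (if k \<le> k1 then r_first H lam tau (t (k+1)) else r_second H lam tau (t (k+1)))"
        using r_large by blast
      then show ?thesis using r_first_nonneg[OF pos(1,2) H(1) tk] r_second_nonneg[OF pos(1,2) H(1) tk]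
        by (simp split: if_splits)
    qed
  qed
  have step: "L2sq L L' (u (Suc k)) \<le> L2sq L L' (u k)" for k
  proof -
    define v where "v = (\<lambda>p. (u (Suc k) (fst p) (snd p))\<^sup>2)"
    define W where "W = (\<lambda>p. (u k (fst p) (snd p))\<^sup>2)"
    have vm[measurable]: "v \<in> borel_measurable borel" unfolding v_def using meas[of "Suc k"] by measurable
    have vnn: "\<And>p. v p \<ge> 0" unfolding v_def by simp
    have vi: "set_integrable lborel C v" unfolding v_def C_def using sqint[of "Suc k"] by simp
    have Wi: "set_integrable lborel C W" unfolding W_def C_def using sqint[of k] by simp
    have vpx: "v (x + L, y) = v (x, y)" for x y unfolding v_def using perx by simp
    have vpy: "v (x, y + L') = v (x, y)" for x y unfolding v_def using pery by simp
    have sx: "set_integrable lborel C (\<lambda>p. v (fst p + c, snd p)) \<and>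
        set_lebesgue_integral lborel C (\<lambda>p. v (fst p + c, snd p)) = set_lebesgue_integral lborel C v" for c
    proof -
      have s[measurable]: "(\<lambda>p::real\<times>real. (fst p + c, snd p)) \<in> borel_measurable borel"
        by (intro borel_measurable_continuous_onI continuous_intros)
      have eq: "(\<integral>\<^sup>+p. indicator C p * ennreal (v (fst p + c, snd p)) \<partial>lborel) = (\<integral>\<^sup>+p. indicator C p * ennreal (v p) \<partial>lborel)"
        unfolding C_def by (rule shift2x[of "\<lambda>p. ennreal (v p)", simplified]) (auto simp: vpx pos)
      show ?thesis using shift_real[OF vm s vnn _ vi] eq unfolding C_def by auto
    qed
    have sy: "set_integrable lborel C (\<lambda>p. v (fst p, snd p + c)) \<and>
        set_lebesgue_integral lborel C (\<lambda>p. v (fst p, snd p + c)) = set_lebesgue_integral lborel C v" for c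
    proof -
      have s[measurable]: "(\<lambda>p::real\<times>real. (fst p, snd p + c)) \<in> borel_measurable borel"
        by (intro borel_measurable_continuous_onI continuous_intros)
      have eq: "(\<integral>\<^sup>+p. indicator C p * ennreal (v (fst p, snd p + c)) \<partial>lborel) = (\<integral>\<^sup>+p. indicator C p * ennreal (v p) \<partial>lborel)"
        unfolding C_def by (rule shift2y[of "\<lambda>p. ennreal (v p)", simplified]) (auto simp: vpy pos)
      show ?thesis using shift_real[OF vm s vnn _ vi] eq unfolding C_def by auto
    qed
    define a where "a = r k / h\<^sup>2"
    define b where "b = r k / l\<^sup>2"
    have a: "a \<ge> 0" unfolding a_def using rnn[of k] by simp
    have b: "b \<ge> 0" unfolding b_def using rnn[of k] by simp
    define g where "g = (\<lambda>p. 1/2 * W p + (a/2 * (v (fst p + h, snd p) + v (fst p + -h, snd p))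
       + b/2 * (v (fst p, snd p + l) + v (fst p, snd p + -l))))"
    have gi: "set_integrable lborel C g" unfolding g_def
      using Wi sx[of h] sx[of "-h"] sy[of l] sy[of "-l"]
      by (intro set_integral_add(1) set_integrable_mult_right) auto
    have gI: "set_lebesgue_integral lborel C g = 1/2 * set_lebesgue_integral lborel C W
        + (a + b) * set_lebesgue_integral lborel C v"
      unfolding g_def
      using Wi sx[of h] sx[of "-h"] sy[of l] sy[of "-l"]
      by (simp add: set_integral_add set_integrable_mult_right algebra_simps)
    have fi: "set_integrable lborel C (\<lambda>p. (1/2 + a + b) * v p)" using vi by auto
    have mono: "set_lebesgue_integral lborel C (\<lambda>p. (1/2 + a + b) * v p) \<le> set_lebesgue_integral lborel C g"
    proof (rule set_integral_mono[OF fi gi])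
      fix p :: "real \<times> real"
      obtain x y where p: "p = (x, y)" by (cases p)
      have sch: "u k x y = (1 + 2*a + 2*b) * u (Suc k) x y - a * (u (Suc k) (x + h) y + u (Suc k) (x - h) y)
          - b * (u (Suc k) x (y + l) + u (Suc k) x (y - l))"
        using scheme[of k x y] unfolding a_def b_def by (simp add: algebra_simps)
      show "(1/2 + a + b) * v p \<le> g p"
        using pw[OF a b sch] unfolding g_def v_def W_def p by simp
    qed
    then have "(1/2 + a + b) * set_lebesgue_integral lborel C v \<le>
        1/2 * set_lebesgue_integral lborel C W + (a + b) * set_lebesgue_integral lborel C v"
      using gI by simp
    then have "set_lebesgue_integral lborel C v \<le> set_lebesgue_integral lborel C W"
      by (simp add: algebra_simps)
    then show ?thesis unfolding L2sq_def v_def W_def C_def by simp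
  qed
  show ?thesis
  proof
    fix k show "L2sq L L' (u k) \<le> L2sq L L' (u 0)"
      by (induction k) (auto intro: order_trans[OF step])
  qed
qed

end
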